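(* Let $\mathbb{X}$ be a finite-dimensional real polyhedral Banach space such that for all non-zero $x_1,x_2\in\mathbb{X}$, if the order of smoothness of $x_1$ is strictly greater than that of $x_2$, then $|\mathrm{Ext}\,J(x_1)|>|\mathrm{Ext}\,J(x_2)|$. If a bijective operator $T\in\mathbb{L}(\mathbb{X})$ preserves parallel pairs, then for each non-zero $z\in\mathbb{X}$ the order of smoothness of $Tz$ equals the order of smoothness of $z$.
   Context: A finite-dimensional Banach space is polyhedral if its unit ball has finitely many extreme points. For non-zero $x$, $J(x)=\{f\in S_{\mathbb{X}^*}: f(x)=\|x\|\}$ and $\mathrm{Ext}\,J(x)$ is its set of extreme points. The order of smoothness of non-zero $x$ is $\dim(\mathrm{span}\,J(x))$ ($x$ is $k$-smooth if this equals $k$). $(x,y)$ is a parallel pair if $\|x+\lambda y\|=\|x\|+\|y\|$ for some $\lambda$ with $|\lambda|=1$; $T$ preserves parallel pairs if $(x,y)$ parallel implies $(Tx,Ty)$ parallel. *)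

theory Defs
  imports "HOL-Analysis.Analysis"
begin

text \<open>A finite-dimensional real normed space (automatically Banach).\<close>
definition fin_dim_space :: "'a::real_normed_vector itself \<Rightarrow> bool" where
  "fin_dim_space _ \<longleftrightarrow> (\<exists>B::'a set. finite B \<and> span B = UNIV)"

definition polyhedral :: "'a::real_normed_vector itself \<Rightarrow> bool" where
  "polyhedral _ \<longleftrightarrow> finite {x::'a. x extreme_point_of cball 0 1}"

definition J :: "'a::real_normed_vector \<Rightarrow> ('a \<Rightarrow>\<^sub>L real) set" where
  "J x = {f. norm f = 1 \<and> blinfun_apply f x = norm x}"

definition ExtJ :: "'a::real_normed_vector \<Rightarrow> ('a \<Rightarrow>\<^sub>L real) set" where
  "ExtJ x = {f. f extreme_point_of J x}"

definition smooth_order :: "'a::real_normed_vector \<Rightarrow> nat" where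
  "smooth_order x = dim (span (J x))"

definition parallel :: "'a::real_normed_vector \<Rightarrow> 'a \<Rightarrow> bool" where
  "parallel x y \<longleftrightarrow> (\<exists>c::real. \<bar>c\<bar> = 1 \<and> norm (x + c *\<^sub>R y) = norm x + norm y)"

definition preserves_parallel :: "('a::real_normed_vector \<Rightarrow> 'a) \<Rightarrow> bool" where
  "preserves_parallel T \<longleftrightarrow> (\<forall>x y. parallel x y \<longrightarrow> parallel (T x) (T y))"

end

theory Submission
  imports Defs
begin

lemma subseq_conv_finite:
  fixes c :: "'i \<Rightarrow> nat \<Rightarrow> real"
  assumes "finite I" "\<And>i. i \<in> I \<Longrightarrow> bounded (range (c i))"
  shows "\<exists>r. strict_mono r \<and> (\<forall>i\<in>I. convergent (\<lambda>n. c i (r n)))"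
  using assms
proof (induction I rule: finite_induct)
  case empty
  then show ?case by (auto intro: exI[of _ id] simp: strict_mono_def)
next
  case (insert j I)
  then obtain r where r: "strict_mono r" "\<forall>i\<in>I. convergent (\<lambda>n. c i (r n))" by auto
  have "range (\<lambda>n. c j (r n)) \<subseteq> range (c j)" by auto
  then have "bounded (range (\<lambda>n. c j (r n)))"
    using insert.prems bounded_subset by blast
  then obtain l r' where r': "strict_mono r'" "((\<lambda>n. c j (r n)) \<circ> r') \<longlonglongrightarrow> l"
    using bounded_imp_convergent_subsequence by blast
  show ?case
  proof (intro exI[of _ "r \<circ> r'"] conjI ballI)
    show "strict_mono (r \<circ> r')" using r r' strict_mono_o by blast
    fix i assume "i \<in> insert j I"
    then show "convergent (\<lambda>n. c i ((r \<circ> r') n))"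
    proof
      assume "i = j" then show ?thesis using r' by (auto simp: convergent_def o_def)
    next
      assume "i \<in> I"
      then have "convergent ((\<lambda>n. c i (r n)) \<circ> r')"
        using r r' convergent_subseq_convergent by blast
      then show ?thesis by (simp add: o_def)
    qed
  qed
qed

lemma compact_fin:
  fixes S :: "'v::real_normed_vector set" and l :: "'i \<Rightarrow> 'v \<Rightarrow> real"
  assumes I: "finite I"
    and lb: "\<And>i v. i \<in> I \<Longrightarrow> \<bar>l i v\<bar> \<le> M * norm v"
    and rep: "\<And>v. v = (\<Sum>i\<in>I. l i v *\<^sub>R e i)"
    and S: "bounded S" "closed S"
  shows "compact S"
  unfolding compact_eq_seq_compact_metric seq_compact_def
proof (intro allI impI)
  fix f :: "nat \<Rightarrow> 'v" assume f: "\<forall>n. f n \<in> S"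
  obtain K where K: "\<And>x. x \<in> S \<Longrightarrow> norm x \<le> K" using S(1) bounded_iff by blast
  have "bounded (range (\<lambda>n. l i (f n)))" if "i \<in> I" for i
  proof -
    have "\<bar>l i (f n)\<bar> \<le> \<bar>M\<bar> * \<bar>K\<bar>" for n
    proof -
      have "\<bar>l i (f n)\<bar> \<le> M * norm (f n)" using lb that by blast
      also have "\<dots> \<le> \<bar>M\<bar> * norm (f n)" by (simp add: mult_right_mono)
      also have "\<dots> \<le> \<bar>M\<bar> * \<bar>K\<bar>" using K f by (intro mult_left_mono) (meson abs_ge_self order_trans, simp)
      finally show ?thesis .
    qed
    then show ?thesis by (auto simp: bounded_iff)
  qed
  then obtain r where r: "strict_mono r" "\<forall>i\<in>I. convergent (\<lambda>n. l i (f (r n)))"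
    using subseq_conv_finite[OF I, of "\<lambda>i n. l i (f n)"] by blast
  define L where "L i = lim (\<lambda>n. l i (f (r n)))" for i
  have L: "(\<lambda>n. l i (f (r n))) \<longlonglongrightarrow> L i" if "i \<in> I" for i
    using r(2) that by (simp add: L_def convergent_LIMSEQ_iff)
  have "(\<lambda>n. \<Sum>i\<in>I. l i (f (r n)) *\<^sub>R e i) \<longlonglongrightarrow> (\<Sum>i\<in>I. L i *\<^sub>R e i)"
    by (intro tendsto_sum tendsto_scaleR L tendsto_const)
  then have lim: "(f \<circ> r) \<longlonglongrightarrow> (\<Sum>i\<in>I. L i *\<^sub>R e i)"
    by (subst (asm) rep[symmetric]) (simp add: o_def)
  have "(\<Sum>i\<in>I. L i *\<^sub>R e i) \<in> S"
    using closed_sequentially[OF S(2) _ lim] f by auto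
  then show "\<exists>l\<in>S. \<exists>r. strict_mono r \<and> (f \<circ> r) \<longlonglongrightarrow> l" using r(1) lim by blast
qed




lemma open_segment_linear_max:
  fixes l :: "'v::real_vector \<Rightarrow> real"
  assumes "linear l" "p \<in> open_segment a b" "l a \<le> l p" "l b \<le> l p"
  shows "l a = l p \<and> l b = l p"
proof -
  obtain u where u: "0 < u" "u < 1" "p = (1 - u) *\<^sub>R a + u *\<^sub>R b"
    using assms(2) by (auto simp: in_segment)
  have "l p = (1 - u) * l a + u * l b"
    using u(3) linear_add[OF assms(1)] linear_scale[OF assms(1)] by simp
  then have e: "(1-u)*(l p - l a) + u*(l p - l b) = 0" by (simp add: algebra_simps)
  have n1: "(1-u)*(l p - l a) \<ge> 0" "u*(l p - l b) \<ge> 0" using assms(3,4) u(1,2) by auto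
  then have "(1-u)*(l p - l a) = 0" "u*(l p - l b) = 0" using e by linarith+
  then show ?thesis using u(1,2) by auto
qed

lemma lex_extreme:
  fixes K :: "'v::real_normed_vector set" and ls :: "('v \<Rightarrow> real) list"
  assumes "compact K" "K \<noteq> {}" "\<forall>l\<in>set ls. bounded_linear l"
  shows "\<exists>p\<in>K. \<forall>a\<in>K. \<forall>b\<in>K. p \<in> open_segment a b \<longrightarrow> (\<forall>l\<in>set ls. l a = l p \<and> l b = l p)"
  using assms
proof (induction ls arbitrary: K)
  case Nil
  then show ?case by auto
next
  case (Cons l ls)
  have bl: "bounded_linear l" using Cons.prems by auto
  then have lin: "linear l" using bounded_linear.linear by blast
  have cont: "continuous_on K l" using bl linear_continuous_on by blast
  obtain m where m: "m \<in> l ` K" "\<forall>t\<in>l ` K. t \<le> m"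
    using compact_attains_sup[OF compact_continuous_image[OF cont Cons.prems(1)]] Cons.prems(2) by blast
  define K' where "K' = K \<inter> l -` {m..}"
  have "closed (l -` {m..})"
    by (intro closed_vimage) (auto intro: linear_continuous_on bl)
  then have cK': "compact K'" unfolding K'_def using Cons.prems(1) compact_Int_closed by blast
  have neK': "K' \<noteq> {}" using m unfolding K'_def by auto
  have K'eq: "x \<in> K' \<longleftrightarrow> x \<in> K \<and> l x = m" for x
    using m unfolding K'_def by force
  obtain p where p: "p \<in> K'" "\<forall>a\<in>K'. \<forall>b\<in>K'. p \<in> open_segment a b \<longrightarrow> (\<forall>l\<in>set ls. l a = l p \<and> l b = l p)"
    using Cons.IH[OF cK' neK'] Cons.prems(3) by auto
  show ?case
  proof (intro bexI[of _ p] ballI impI)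
    fix a b l' assume ab: "a \<in> K" "b \<in> K" "p \<in> open_segment a b" and l': "l' \<in> set (l # ls)"
    have "l a \<le> l p" "l b \<le> l p" using ab m p(1) K'eq by auto
    then have "l a = l p \<and> l b = l p" using open_segment_linear_max[OF lin ab(3)] by blast
    then have "a \<in> K'" "b \<in> K'" using ab p(1) K'eq by auto
    then show "l' a = l' p \<and> l' b = l' p"
      using p ab(3) \<open>l a = l p \<and> l b = l p\<close> l' by auto
  next
    show "p \<in> K" using p(1) K'eq by auto
  qed
qed

lemma lex_extreme_point:
  fixes K :: "'v::real_normed_vector set" and ls :: "('v \<Rightarrow> real) list"
  assumes "compact K" "K \<noteq> {}" "\<forall>l\<in>set ls. bounded_linear l"
    and sep: "\<And>a b. a \<in> K \<Longrightarrow> b \<in> K \<Longrightarrow> (\<forall>l\<in>set ls. l a = l b) \<Longrightarrow> a = b"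
  shows "\<exists>p. p extreme_point_of K"
proof -
  obtain p where p: "p \<in> K" "\<forall>a\<in>K. \<forall>b\<in>K. p \<in> open_segment a b \<longrightarrow> (\<forall>l\<in>set ls. l a = l p \<and> l b = l p)"
    using lex_extreme[OF assms(1-3)] by blast
  have "p extreme_point_of K"
    unfolding extreme_point_of_def
  proof (intro conjI ballI p(1) notI)
    fix a b assume ab: "a \<in> K" "b \<in> K" "p \<in> open_segment a b"
    then have "a = p" "b = p" using p sep by auto
    then show False using ab(3) by simp
  qed
  then show ?thesis by blast
qed

lemma extreme_face:
  fixes l :: "'v::real_vector \<Rightarrow> real"
  assumes "linear l" "p extreme_point_of {x\<in>L. l x = m}" "\<And>x. x \<in> L \<Longrightarrow> l x \<le> m"
  shows "p extreme_point_of L"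
  unfolding extreme_point_of_def
proof (intro conjI ballI notI)
  show "p \<in> L" using assms(2) by (auto simp: extreme_point_of_def)
  have lp: "l p = m" using assms(2) by (auto simp: extreme_point_of_def)
  fix a b assume ab: "a \<in> L" "b \<in> L" "p \<in> open_segment a b"
  then have "l a = m \<and> l b = m" using open_segment_linear_max[OF assms(1) ab(3)] assms(3) lp by auto
  then show False using assms(2) ab unfolding extreme_point_of_def by auto
qed

lemma extreme_subset:
  assumes "p extreme_point_of L" "K \<subseteq> L" "p \<in> K"
  shows "p extreme_point_of K"
  using assms unfolding extreme_point_of_def by blast




definition lin_on :: "'a::real_vector set \<Rightarrow> ('a \<Rightarrow> real) \<Rightarrow> bool" where
  "lin_on S f \<longleftrightarrow> (\<forall>u\<in>S. \<forall>v\<in>S. f (u + v) = f u + f v) \<and> (\<forall>u\<in>S. \<forall>c. f (c *\<^sub>R u) = c * f u)"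

lemma hb_step:
  fixes S :: "'a::real_normed_vector set"
  assumes S: "subspace S" and f: "lin_on S f" and fb: "\<forall>u\<in>S. f u \<le> norm u" and v: "v \<notin> S"
  shows "\<exists>g. lin_on (span (insert v S)) g \<and> (\<forall>u\<in>S. g u = f u) \<and> (\<forall>u\<in>span (insert v S). g u \<le> norm u)"
proof -
  have fadd: "f (u + w) = f u + f w" if "u \<in> S" "w \<in> S" for u w using f that by (auto simp: lin_on_def)
  have fsc: "f (a *\<^sub>R u) = a * f u" if "u \<in> S" for a u using f that by (auto simp: lin_on_def)
  define X where "X = (\<lambda>u. f u - norm (u - v)) ` S"
  have X0: "X \<noteq> {}" using S subspace_0 unfolding X_def by blast
  have Xb: "t \<le> norm (w + v) - f w" if "t \<in> X" "w \<in> S" for t w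
  proof -
    obtain u where u: "u \<in> S" "t = f u - norm (u - v)" using \<open>t \<in> X\<close> unfolding X_def by blast
    have "f u + f w = f (u + w)" using fadd u(1) that(2) by simp
    also have "\<dots> \<le> norm (u + w)" using fb u(1) that(2) S subspace_add by blast
    also have "\<dots> = norm ((u - v) + (w + v))" by (simp add: algebra_simps)
    also have "\<dots> \<le> norm (u - v) + norm (w + v)" by (rule norm_triangle_ineq)
    finally show ?thesis using u by simp
  qed
  define c where "c = Sup X"
  have bdd: "bdd_above X"
  proof
    fix t assume "t \<in> X" then show "t \<le> norm (0 + v) - f 0" using Xb S subspace_0 by blast
  qed
  have c1: "f u - norm (u - v) \<le> c" if "u \<in> S" for u
  proof -
    have "f u - norm (u - v) \<in> X" using that unfolding X_def by blast
    then show ?thesis unfolding c_def using cSup_upper[OF _ bdd] by blast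
  qed
  have c2: "c \<le> norm (w + v) - f w" if "w \<in> S" for w
    unfolding c_def using cSup_least[OF X0] Xb that by blast
  have spanS: "span S = S" using S by (simp add: span_eq_iff)
  have sp: "span (insert v S) = {x. \<exists>k. x - k *\<^sub>R v \<in> S}"
    using span_insert[of v S] spanS by simp
  have uniq: "k = k'" if "x - k *\<^sub>R v \<in> S" "x - k' *\<^sub>R v \<in> S" for x k k'
  proof (rule ccontr)
    assume "k \<noteq> k'"
    have "(x - k *\<^sub>R v) - (x - k' *\<^sub>R v) \<in> S" using that S subspace_diff by blast
    then have "(k' - k) *\<^sub>R v \<in> S" by (simp add: algebra_simps)
    then have "(1 / (k' - k)) *\<^sub>R ((k' - k) *\<^sub>R v) \<in> S" using S subspace_scale by blast
    then show False using \<open>k \<noteq> k'\<close> v by simp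
  qed
  define co where "co x = (THE k. x - k *\<^sub>R v \<in> S)" for x
  have co: "co x = k" if "x - k *\<^sub>R v \<in> S" for x k
    unfolding co_def using uniq that by blast
  define g where "g x = f (x - co x *\<^sub>R v) + co x * c" for x
  have gform: "g (u + k *\<^sub>R v) = f u + k * c" if "u \<in> S" for u k
  proof -
    have "co (u + k *\<^sub>R v) = k" by (rule co) (simp add: that)
    then show ?thesis unfolding g_def by simp
  qed
  have dec: "\<exists>u k. u \<in> S \<and> x = u + k *\<^sub>R v" if "x \<in> span (insert v S)" for x
  proof -
    have "x \<in> {x. \<exists>k. x - k *\<^sub>R v \<in> S}" using that sp by simp
    then obtain k where "x - k *\<^sub>R v \<in> S" by blast
    moreover have "x = (x - k *\<^sub>R v) + k *\<^sub>R v" by simp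
    ultimately show ?thesis by blast
  qed
  have "lin_on (span (insert v S)) g"
    unfolding lin_on_def
  proof (intro conjI ballI allI)
    fix x y assume "x \<in> span (insert v S)" "y \<in> span (insert v S)"
    then obtain u k u' k' where uk: "u \<in> S" "x = u + k *\<^sub>R v" "u' \<in> S" "y = u' + k' *\<^sub>R v"
      using dec by meson
    have "x + y = (u + u') + (k + k') *\<^sub>R v" using uk by (simp add: algebra_simps)
    moreover have "u + u' \<in> S" using uk S subspace_add by blast
    ultimately have "g (x + y) = f (u + u') + (k + k') * c" using gform by simp
    then show "g (x + y) = g x + g y" using gform uk fadd by (simp add: algebra_simps)
  next
    fix x a assume "x \<in> span (insert v S)"
    then obtain u k where uk: "u \<in> S" "x = u + k *\<^sub>R v" using dec by meson
    have "a *\<^sub>R x = a *\<^sub>R u + (a * k) *\<^sub>R v" using uk by (simp add: algebra_simps)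
    moreover have "a *\<^sub>R u \<in> S" using uk S subspace_scale by blast
    ultimately have "g (a *\<^sub>R x) = f (a *\<^sub>R u) + (a * k) * c" using gform by simp
    then show "g (a *\<^sub>R x) = a * g x" using gform uk fsc by (simp add: algebra_simps)
  qed
  moreover have "\<forall>u\<in>S. g u = f u" using gform[of _ 0] by simp
  moreover have "\<forall>x\<in>span (insert v S). g x \<le> norm x"
  proof
    fix x assume "x \<in> span (insert v S)"
    then obtain u k where uk: "u \<in> S" "x = u + k *\<^sub>R v" using dec by meson
    have gx: "g x = f u + k * c" using gform uk by simp
    consider "k = 0" | "k > 0" | "k < 0" by linarith
    then show "g x \<le> norm x"
    proof cases
      case 1 then show ?thesis using gx uk fb by simp
    next
      case 2
      have w: "(1 / k) *\<^sub>R u \<in> S" using uk S subspace_scale by blast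
      have "c \<le> norm ((1/k) *\<^sub>R u + v) - f ((1/k) *\<^sub>R u)" using c2[OF w] .
      then have "k * c \<le> k * norm ((1/k) *\<^sub>R u + v) - k * f ((1/k) *\<^sub>R u)"
        using 2 by (simp add: right_diff_distrib[symmetric])
      also have "k * f ((1/k) *\<^sub>R u) = f u" using fsc uk 2 by simp
      also have "k * norm ((1/k) *\<^sub>R u + v) = norm (k *\<^sub>R ((1/k) *\<^sub>R u + v))" using 2 by simp
      also have "k *\<^sub>R ((1/k) *\<^sub>R u + v) = x" using 2 uk by (simp add: scaleR_add_right)
      finally show ?thesis using gx by simp
    next
      case 3
      define s where "s = - k"
      have s: "s > 0" using 3 s_def by simp
      have w: "(1 / s) *\<^sub>R u \<in> S" using uk S subspace_scale by blast
      have "f ((1/s) *\<^sub>R u) - norm ((1/s) *\<^sub>R u - v) \<le> c" using c1[OF w] .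
      then have "s * f ((1/s) *\<^sub>R u) - s * c \<le> s * norm ((1/s) *\<^sub>R u - v)"
        using s by (simp add: right_diff_distrib[symmetric])
      also have "s * f ((1/s) *\<^sub>R u) = f u" using fsc uk s by simp
      also have "s * norm ((1/s) *\<^sub>R u - v) = norm (s *\<^sub>R ((1/s) *\<^sub>R u - v))" using s by simp
      also have "s *\<^sub>R ((1/s) *\<^sub>R u - v) = x" using s uk s_def by (simp add: scaleR_diff_right)
      finally show ?thesis using gx s_def by simp
    qed
  qed
  ultimately show ?thesis by blast
qed

lemma hb_ext:
  fixes S :: "'a::real_normed_vector set"
  assumes A: "finite A" and S: "subspace S" and f: "lin_on S f" and fb: "\<forall>u\<in>S. f u \<le> norm u"
  shows "\<exists>g. lin_on (span (S \<union> A)) g \<and> (\<forall>u\<in>S. g u = f u) \<and> (\<forall>u\<in>span (S \<union> A). g u \<le> norm u)"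
  using A
proof (induction A rule: finite_induct)
  case empty
  have sS: "span S = S" using S by (simp add: span_eq_iff)
  show ?case by (rule exI[of _ f], unfold Un_empty_right sS) (use f fb in auto)
next
  case (insert a A)
  then obtain g where g: "lin_on (span (S \<union> A)) g" "\<forall>u\<in>S. g u = f u" "\<forall>u\<in>span (S \<union> A). g u \<le> norm u"
    by blast
  show ?case
  proof (cases "a \<in> span (S \<union> A)")
    case True
    then have "span (S \<union> insert a A) = span (S \<union> A)"
      by (metis Un_insert_right span_redundant)
    then show ?thesis using g by auto
  next
    case False
    obtain g' where g': "lin_on (span (insert a (span (S \<union> A)))) g'" "\<forall>u\<in>span (S \<union> A). g' u = g u"
      "\<forall>u\<in>span (insert a (span (S \<union> A))). g' u \<le> norm u"
      using hb_step[OF subspace_span g(1) g(3) False] by blast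
    have eq: "span (insert a (span (S \<union> A))) = span (S \<union> insert a A)"
      by (simp add: span_insert span_span)
    show ?thesis using g' g(2) eq span_superset[of "S \<union> A"] by (intro exI[of _ g']) auto
  qed
qed

lemma hb_fd:
  fixes x :: "'a::real_normed_vector" and Bs :: "'a set"
  assumes Bs: "finite Bs" "span Bs = UNIV" and x: "x \<noteq> 0"
  shows "\<exists>g::'a \<Rightarrow>\<^sub>L real. norm g \<le> 1 \<and> blinfun_apply g x = norm x"
proof -
  define S where "S = span {x}"
  have S: "subspace S" unfolding S_def by simp
  have Sx: "S = range (\<lambda>t. t *\<^sub>R x)" unfolding S_def span_singleton by auto
  define f where "f u = (THE t. u = t *\<^sub>R x) * norm x" for u
  have ft: "f (t *\<^sub>R x) = t * norm x" for t
  proof -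
    have "(THE s. t *\<^sub>R x = s *\<^sub>R x) = t" using x by (intro the_equality) auto
    then show ?thesis unfolding f_def by simp
  qed
  have "lin_on S f" unfolding lin_on_def
  proof (intro conjI ballI allI)
    fix u w assume "u \<in> S" "w \<in> S"
    then obtain a b where ab: "u = a *\<^sub>R x" "w = b *\<^sub>R x" unfolding Sx by blast
    then have "u + w = (a + b) *\<^sub>R x" by (simp add: scaleR_add_left)
    then show "f (u + w) = f u + f w" using ab by (simp add: ft distrib_right)
  next
    fix u c assume "u \<in> S"
    then obtain a where a: "u = a *\<^sub>R x" unfolding Sx by blast
    then have "c *\<^sub>R u = (c * a) *\<^sub>R x" by simp
    then show "f (c *\<^sub>R u) = c * f u" using a by (simp add: ft)
  qed
  moreover have "\<forall>u\<in>S. f u \<le> norm u" unfolding Sx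
    by (auto simp: ft intro: mult_right_mono[OF abs_ge_self norm_ge_zero])
  ultimately obtain g where g: "lin_on (span (S \<union> Bs)) g" "\<forall>u\<in>S. g u = f u" "\<forall>u\<in>span (S \<union> Bs). g u \<le> norm u"
    using hb_ext[OF Bs(1) S] by blast
  have U: "span (S \<union> Bs) = UNIV" using Bs(2) span_mono[of Bs "S \<union> Bs"] by auto
  have lin: "linear g" using g(1) unfolding U lin_on_def by (intro linearI) auto
  have gb: "\<bar>g u\<bar> \<le> norm u" for u
  proof -
    have "g u \<le> norm u" using g(3) U by auto
    moreover have "g (- u) \<le> norm (- u)" using g(3) U by blast
    then have "- g u \<le> norm u" using linear_neg[OF lin] by simp
    ultimately show ?thesis by linarith
  qed
  have bl: "bounded_linear g"
    using lin gb by (intro bounded_linear_intro[of _ 1]) (auto simp: linear_add linear_scale)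
  have "norm (Blinfun g) \<le> 1"
    by (rule norm_blinfun_bound) (auto simp: bounded_linear_Blinfun_apply[OF bl] gb)
  moreover have "blinfun_apply (Blinfun g) x = norm x"
    using g(2) ft[of 1] unfolding S_def by (simp add: bounded_linear_Blinfun_apply[OF bl] span_base)
  ultimately show ?thesis by blast
qed

locale fdim =
  fixes Bs :: "'a::real_normed_vector set"
  assumes fin: "finite Bs" and ind: "independent Bs" and spn: "span Bs = UNIV"
begin

definition co :: "'a \<Rightarrow> 'a \<Rightarrow> real" where "co b v = representation Bs v b"

lemma rep: "v = (\<Sum>b\<in>Bs. co b v *\<^sub>R b)"
  unfolding co_def using sum_representation_eq[OF ind _ fin order_refl, of v] spn by simp

lemma co_add: "co b (u + v) = co b u + co b v"
  unfolding co_def using representation_add[OF ind] spn by simp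

lemma co_scale: "co b (c *\<^sub>R v) = c * co b v"
  unfolding co_def using representation_scale[OF ind] spn by simp

lemma co_linear: "linear (co b)"
  by (intro linearI) (simp_all add: co_add co_scale)

lemma co_zero_unique:
  assumes "(\<Sum>b\<in>Bs. L b *\<^sub>R b) = 0" "b \<in> Bs"
  shows "L b = 0"
  using independentD[OF ind fin order_refl assms(1) assms(2)] .

lemma coef_bound: "\<exists>M. \<forall>b\<in>Bs. \<forall>v. \<bar>co b v\<bar> \<le> M * norm v"
proof (rule ccontr)
  assume nb: "\<not> ?thesis"
  have "\<forall>n::nat. \<exists>v. \<exists>b\<in>Bs. \<bar>co b v\<bar> > real (Suc n) * norm v"
  proof
    fix n :: nat
    show "\<exists>v. \<exists>b\<in>Bs. \<bar>co b v\<bar> > real (Suc n) * norm v"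
    proof (rule ccontr)
      assume "\<not> (\<exists>v. \<exists>b\<in>Bs. \<bar>co b v\<bar> > real (Suc n) * norm v)"
      then have "\<forall>b\<in>Bs. \<forall>v. \<bar>co b v\<bar> \<le> real (Suc n) * norm v" by (simp add: not_less)
      then show False using nb by blast
    qed
  qed
  from choice[OF this] obtain V where V: "\<forall>n. \<exists>b\<in>Bs. \<bar>co b (V n)\<bar> > real (Suc n) * norm (V n)"
    by blast
  define sg where "sg v = (\<Sum>b\<in>Bs. \<bar>co b v\<bar>)" for v
  have sgge: "\<bar>co b v\<bar> \<le> sg v" if "b \<in> Bs" for b v
    unfolding sg_def using fin that by (intro member_le_sum) auto
  have sgpos: "sg (V n) > 0" and nV: "real (Suc n) * norm (V n) < sg (V n)" for n
  proof -
    obtain b where b: "b \<in> Bs" "\<bar>co b (V n)\<bar> > real (Suc n) * norm (V n)" using V by blast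
    have "0 \<le> real (Suc n) * norm (V n)" by simp
    then show "sg (V n) > 0" "real (Suc n) * norm (V n) < sg (V n)" using b sgge[of b "V n"] by linarith+
  qed
  define W where "W n = (1 / sg (V n)) *\<^sub>R V n" for n
  have coW: "co b (W n) = co b (V n) / sg (V n)" for b n unfolding W_def co_scale by simp
  have sgW: "sg (W n) = 1" for n
  proof -
    have "sg (W n) = (\<Sum>b\<in>Bs. \<bar>co b (V n)\<bar> / sg (V n))"
      unfolding sg_def coW using sgpos[of n] by simp
    also have "\<dots> = sg (V n) / sg (V n)" unfolding sg_def by (rule sum_divide_distrib[symmetric])
    finally show ?thesis using sgpos[of n] by simp
  qed
  have nW: "norm (W n) < 1 / real (Suc n)" for n
  proof -
    have "norm (W n) = norm (V n) / sg (V n)" unfolding W_def using sgpos[of n] by simp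
    also have "\<dots> < 1 / real (Suc n)"
      using nV[of n] sgpos[of n] by (simp add: field_simps)
    finally show ?thesis .
  qed
  have "bounded (range (\<lambda>n. co b (W n)))" if "b \<in> Bs" for b
    unfolding bounded_iff
  proof (intro exI[of _ 1] ballI)
    fix y assume "y \<in> range (\<lambda>n. co b (W n))"
    then obtain n where "y = co b (W n)" by blast
    then show "norm y \<le> 1" using sgge[OF that, of "W n"] sgW[of n] by simp
  qed
  then obtain r where r: "strict_mono r" "\<forall>b\<in>Bs. convergent (\<lambda>n. co b (W (r n)))"
    using subseq_conv_finite[OF fin, of "\<lambda>b n. co b (W n)"] by blast
  define L where "L b = lim (\<lambda>n. co b (W (r n)))" for b
  have L: "(\<lambda>n. co b (W (r n))) \<longlonglongrightarrow> L b" if "b \<in> Bs" for b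
    using r(2) that by (simp add: L_def convergent_LIMSEQ_iff)
  have "(\<lambda>n. \<Sum>b\<in>Bs. co b (W (r n)) *\<^sub>R b) \<longlonglongrightarrow> (\<Sum>b\<in>Bs. L b *\<^sub>R b)"
    by (intro tendsto_sum tendsto_scaleR L tendsto_const)
  then have lim1: "(\<lambda>n. W (r n)) \<longlonglongrightarrow> (\<Sum>b\<in>Bs. L b *\<^sub>R b)"
    using rep[symmetric] by simp
  have "(\<lambda>n. W (r n)) \<longlonglongrightarrow> 0"
  proof (rule tendsto_norm_zero_cancel, rule Lim_null_comparison)
    show "\<forall>\<^sub>F n in sequentially. norm (norm (W (r n))) \<le> 1 / real (Suc n)"
    proof (intro always_eventually allI)
      fix n
      have "r n \<ge> n" using r(1) seq_suble by blast
      then have "1 / real (Suc (r n)) \<le> 1 / real (Suc n)" by (simp add: frac_le)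
      then show "norm (norm (W (r n))) \<le> 1 / real (Suc n)" using nW[of "r n"] by simp
    qed
    show "(\<lambda>n. 1 / real (Suc n)) \<longlonglongrightarrow> 0" using LIMSEQ_inverse_real_of_nat by (simp add: inverse_eq_divide)
  qed
  then have "(\<Sum>b\<in>Bs. L b *\<^sub>R b) = 0" using lim1 LIMSEQ_unique by blast
  then have L0: "L b = 0" if "b \<in> Bs" for b using co_zero_unique that by blast
  have "(\<lambda>n. sg (W (r n))) \<longlonglongrightarrow> (\<Sum>b\<in>Bs. \<bar>L b\<bar>)"
    unfolding sg_def by (intro tendsto_sum tendsto_rabs L)
  moreover have "(\<Sum>b\<in>Bs. \<bar>L b\<bar>) = 0" using L0 by simp
  moreover have "(\<lambda>n. sg (W (r n))) = (\<lambda>n. 1)" using sgW by simp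
  ultimately have "(\<lambda>n. 1::real) \<longlonglongrightarrow> 0" by simp
  then have "(1::real) = 0" by (rule LIMSEQ_const_iff[THEN iffD1])
  then show False by simp
qed

lemma linear_bounded_fd:
  fixes f :: "'a \<Rightarrow> 'b::real_normed_vector"
  assumes "linear f"
  shows "bounded_linear f"
proof -
  obtain M where M: "\<forall>b\<in>Bs. \<forall>v. \<bar>co b v\<bar> \<le> M * norm v" using coef_bound by blast
  have "norm (f v) \<le> norm v * (\<Sum>b\<in>Bs. M * norm (f b))" for v
  proof -
    have "f v = (\<Sum>b\<in>Bs. co b v *\<^sub>R f b)"
      by (subst rep) (simp add: linear_sum[OF assms] linear_scale[OF assms])
    then have "norm (f v) \<le> (\<Sum>b\<in>Bs. norm (co b v *\<^sub>R f b))" using norm_sum by metis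
    also have "\<dots> \<le> (\<Sum>b\<in>Bs. M * norm v * norm (f b))"
      using M by (intro sum_mono) (auto intro: mult_right_mono)
    also have "\<dots> = norm v * (\<Sum>b\<in>Bs. M * norm (f b))"
      by (simp add: sum_distrib_right sum_distrib_left algebra_simps)
    finally show ?thesis .
  qed
  then show ?thesis using assms
    by (intro bounded_linear_intro[of _ "\<Sum>b\<in>Bs. M * norm (f b)"]) (auto simp: linear_add linear_scale)
qed

lemma compact_fd:
  fixes S :: "'a set"
  assumes "bounded S" "closed S"
  shows "compact S"
proof -
  obtain M where M: "\<forall>b\<in>Bs. \<forall>v. \<bar>co b v\<bar> \<le> M * norm v" using coef_bound by blast
  show ?thesis
    by (rule compact_fin[OF fin _ _ assms, of co M "\<lambda>b. b"]) (use M rep in auto)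
qed

definition dco :: "'a \<Rightarrow> ('a \<Rightarrow>\<^sub>L real)" where "dco b = Blinfun (co b)"

lemma dco_apply: "blinfun_apply (dco b) v = co b v"
  unfolding dco_def using bounded_linear_Blinfun_apply[OF linear_bounded_fd[OF co_linear]] by simp

lemma compact_dual:
  fixes S :: "('a \<Rightarrow>\<^sub>L real) set"
  assumes "bounded S" "closed S"
  shows "compact S"
proof (rule compact_fin[OF fin _ _ assms, of "\<lambda>b f. blinfun_apply f b" "\<Sum>b\<in>Bs. norm b" dco])
  fix b and f :: "'a \<Rightarrow>\<^sub>L real" assume b: "b \<in> Bs"
  have "\<bar>blinfun_apply f b\<bar> \<le> norm f * norm b" using norm_blinfun[of f b] by simp
  also have "\<dots> \<le> norm f * (\<Sum>b\<in>Bs. norm b)"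
    using b fin by (intro mult_left_mono member_le_sum) auto
  finally show "\<bar>blinfun_apply f b\<bar> \<le> (\<Sum>b\<in>Bs. norm b) * norm f" by (simp add: mult.commute)
next
  fix f :: "'a \<Rightarrow>\<^sub>L real"
  show "f = (\<Sum>b\<in>Bs. blinfun_apply f b *\<^sub>R dco b)"
  proof (rule blinfun_eqI)
    fix v
    have "blinfun_apply f v = blinfun_apply f (\<Sum>b\<in>Bs. co b v *\<^sub>R b)" by (subst rep) simp
    also have "\<dots> = (\<Sum>b\<in>Bs. co b v * blinfun_apply f b)"
      by (simp add: blinfun.sum_right blinfun.scaleR_right)
    also have "\<dots> = blinfun_apply (\<Sum>b\<in>Bs. blinfun_apply f b *\<^sub>R dco b) v"
      by (simp add: blinfun.sum_left dco_apply mult.commute blinfun.scaleR_left)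
    finally show "blinfun_apply f v = blinfun_apply (\<Sum>b\<in>Bs. blinfun_apply f b *\<^sub>R dco b) v" .
  qed
qed

end

lemma bl_le_norm:
  fixes g :: "'a::real_normed_vector \<Rightarrow>\<^sub>L real"
  assumes "norm g \<le> 1"
  shows "\<bar>blinfun_apply g y\<bar> \<le> norm y"
proof -
  have "\<bar>blinfun_apply g y\<bar> \<le> norm g * norm y" using norm_blinfun[of g y] by simp
  also have "\<dots> \<le> norm y" using assms by (simp add: mult_left_le_one_le)
  finally show ?thesis .
qed

locale poly = fdim Bs for Bs :: "'a::real_normed_vector set" +
  assumes finD: "finite {x::'a. x extreme_point_of cball 0 1}"
begin

abbreviation "D \<equiv> {x::'a. x extreme_point_of cball 0 1}"
abbreviation "Bst \<equiv> {f :: 'a \<Rightarrow>\<^sub>L real. norm f \<le> 1}"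
definition "G = {g. g extreme_point_of Bst}"

lemma D_norm: "d \<in> D \<Longrightarrow> norm d \<le> 1"
  by (auto simp: extreme_point_of_def)

lemma sep_list: "\<exists>bl. set bl = Bs" using finite_list[OF fin] .

lemma P1:
  fixes f :: "'a \<Rightarrow>\<^sub>L real"
  shows "\<exists>d\<in>D. \<forall>y\<in>cball 0 1. blinfun_apply f y \<le> blinfun_apply f d"
proof -
  let ?K = "cball (0::'a) 1"
  have cK: "compact ?K" by (rule compact_fd) auto
  have lin: "linear (blinfun_apply f)" using blinfun.bounded_linear_right bounded_linear.linear by blast
  have cont: "continuous_on ?K (blinfun_apply f)" by (intro linear_continuous_on blinfun.bounded_linear_right)
  obtain m where m: "m \<in> blinfun_apply f ` ?K" "\<forall>t\<in>blinfun_apply f ` ?K. t \<le> m"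
  proof -
    have "blinfun_apply f ` ?K \<noteq> {}" by auto
    then show ?thesis using compact_attains_sup[OF compact_continuous_image[OF cont cK]] that by blast
  qed
  define K' where "K' = ?K \<inter> blinfun_apply f -` {m}"
  have "closed (blinfun_apply f -` {m})"
    by (intro closed_vimage) (auto intro: linear_continuous_on blinfun.bounded_linear_right)
  then have cK': "compact K'" unfolding K'_def using cK compact_Int_closed by blast
  have ne: "K' \<noteq> {}" using m unfolding K'_def by auto
  obtain bl where bl: "set bl = Bs" using sep_list by blast
  have "\<exists>p. p extreme_point_of K'"
  proof (rule lex_extreme_point[OF cK' ne, of "map co bl"])
    show "\<forall>l\<in>set (map co bl). bounded_linear l" using linear_bounded_fd[OF co_linear] by auto
    fix a b assume "\<forall>l\<in>set (map co bl). l a = l b"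
    then have "\<forall>c\<in>Bs. co c a = co c b" using bl by auto
    then have "(\<Sum>c\<in>Bs. co c a *\<^sub>R c) = (\<Sum>c\<in>Bs. co c b *\<^sub>R c)" by (intro sum.cong) auto
    then show "a = b" using rep[of a] rep[of b] by argo
  qed
  then obtain p where p: "p extreme_point_of K'" by blast
  have K'eq: "K' = {x\<in>?K. blinfun_apply f x = m}" unfolding K'_def by auto
  have "p extreme_point_of ?K"
    by (rule extreme_face[OF lin p[unfolded K'eq]]) (use m in auto)
  moreover have "blinfun_apply f p = m" using p K'eq by (auto simp: extreme_point_of_def)
  ultimately show ?thesis using m by auto
qed

lemma P2:
  fixes f :: "'a \<Rightarrow>\<^sub>L real"
  shows "norm f \<le> 1 \<longleftrightarrow> (\<forall>d\<in>D. blinfun_apply f d \<le> 1)"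
proof
  assume "norm f \<le> 1"
  then show "\<forall>d\<in>D. blinfun_apply f d \<le> 1"
  proof (intro ballI)
    fix d assume "norm f \<le> 1" "d \<in> D"
    then have "\<bar>blinfun_apply f d\<bar> \<le> norm d" "norm d \<le> 1" using bl_le_norm D_norm by auto
    then show "blinfun_apply f d \<le> 1" by linarith
  qed
next
  assume a: "\<forall>d\<in>D. blinfun_apply f d \<le> 1"
  obtain d where d: "d \<in> D" "\<forall>y\<in>cball 0 1. blinfun_apply f y \<le> blinfun_apply f d" using P1 by blast
  have le: "blinfun_apply f y \<le> 1" if "norm y \<le> 1" for y
  proof -
    have "y \<in> cball 0 1" using that by simp
    then have "blinfun_apply f y \<le> blinfun_apply f d" using d(2) by blast
    moreover have "blinfun_apply f d \<le> 1" using a d(1) by blast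
    ultimately show ?thesis by linarith
  qed
  have le2: "blinfun_apply f y \<le> norm y" for y
  proof (cases "y = 0")
    case False
    then have "blinfun_apply f ((1 / norm y) *\<^sub>R y) \<le> 1" by (intro le) simp
    then show ?thesis using False by (simp add: blinfun.scaleR_right field_simps)
  qed simp
  show "norm f \<le> 1"
  proof (rule norm_blinfun_bound)
    fix y
    have "blinfun_apply f y \<le> norm y" using le2 by blast
    moreover have "- blinfun_apply f y \<le> norm y" using le2[of "-y"] by (simp add: blinfun.minus_right)
    ultimately show "norm (blinfun_apply f y) \<le> 1 * norm y" by simp
  qed simp
qed

lemma G_Bst: "g \<in> G \<Longrightarrow> norm g \<le> 1"
  unfolding G_def by (auto simp: extreme_point_of_def)

lemma G_le: "g \<in> G \<Longrightarrow> blinfun_apply g y \<le> norm y"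
  using bl_le_norm[OF G_Bst] abs_le_D1 by blast

lemma P3:
  fixes f g :: "'a \<Rightarrow>\<^sub>L real"
  assumes g: "g \<in> G" and f: "\<forall>d\<in>D. blinfun_apply g d = 1 \<longrightarrow> blinfun_apply f d = 1"
  shows "f = g"
proof (rule ccontr)
  assume fg: "f \<noteq> g"
  define h where "h = f - g"
  have h0: "h \<noteq> 0" using fg unfolding h_def by simp
  have hA: "blinfun_apply h d = 0" if "d \<in> D" "blinfun_apply g d = 1" for d
    using f that unfolding h_def by (simp add: blinfun.diff_left)
  have gD: "blinfun_apply g d \<le> 1" if "d \<in> D" for d using P2 G_Bst[OF g] that by blast
  define Dn where "Dn = {d\<in>D. blinfun_apply g d \<noteq> 1}"
  define E where "E = insert 1 ((\<lambda>d. (1 - blinfun_apply g d) / (\<bar>blinfun_apply h d\<bar> + 1)) ` Dn)"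
  define e where "e = Min E"
  have finE: "finite E" unfolding E_def Dn_def using finD by simp
  have Epos: "\<forall>t\<in>E. t > 0"
  proof
    fix t assume "t \<in> E"
    then consider "t = 1" | d where "d \<in> Dn" "t = (1 - blinfun_apply g d) / (\<bar>blinfun_apply h d\<bar> + 1)"
      unfolding E_def by blast
    then show "t > 0"
    proof cases
      case 2
      then have "blinfun_apply g d < 1" using gD unfolding Dn_def by force
      then show ?thesis using 2 by (simp add: add_pos_nonneg)
    qed simp
  qed
  have epos: "e > 0" unfolding e_def using finE Epos by (simp add: E_def)
  have ele: "e \<le> (1 - blinfun_apply g d) / (\<bar>blinfun_apply h d\<bar> + 1)" if "d \<in> Dn" for d
    unfolding e_def using finE that by (intro Min_le) (auto simp: E_def)
  have inB: "norm (g + s *\<^sub>R h) \<le> 1" if s: "\<bar>s\<bar> \<le> e" for s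
    unfolding P2
  proof
    fix d assume d: "d \<in> D"
    show "blinfun_apply (g + s *\<^sub>R h) d \<le> 1"
    proof (cases "blinfun_apply g d = 1")
      case True then show ?thesis using hA d by (simp add: blinfun.add_left blinfun.scaleR_left)
    next
      case False
      then have dn: "d \<in> Dn" unfolding Dn_def using d by simp
      have gd: "blinfun_apply g d < 1" using gD[OF d] False by simp
      have "s * blinfun_apply h d \<le> \<bar>s\<bar> * \<bar>blinfun_apply h d\<bar>" by (simp add: abs_mult[symmetric])
      also have "\<dots> \<le> e * \<bar>blinfun_apply h d\<bar>" using s by (simp add: mult_right_mono)
      also have "\<dots> \<le> (1 - blinfun_apply g d) / (\<bar>blinfun_apply h d\<bar> + 1) * \<bar>blinfun_apply h d\<bar>"
        by (rule mult_right_mono[OF ele[OF dn]]) simp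
      also have "\<dots> \<le> 1 - blinfun_apply g d"
      proof -
        have "\<bar>blinfun_apply h d\<bar> / (\<bar>blinfun_apply h d\<bar> + 1) \<le> 1" by simp
        then have "(1 - blinfun_apply g d) * (\<bar>blinfun_apply h d\<bar> / (\<bar>blinfun_apply h d\<bar> + 1)) \<le> (1 - blinfun_apply g d) * 1"
          using gd by (intro mult_left_mono) auto
        then show ?thesis by simp
      qed
      finally show ?thesis by (simp add: blinfun.add_left blinfun.scaleR_left)
    qed
  qed
  have a: "g - e *\<^sub>R h \<in> Bst" using inB[of "-e"] epos by simp
  have b: "g + e *\<^sub>R h \<in> Bst" using inB[of e] epos by simp
  have d2: "(g + e *\<^sub>R h) - (g - e *\<^sub>R h) = 2 *\<^sub>R (e *\<^sub>R h)" by (simp add: scaleR_2 del: scaleR_scaleR)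
  have "g - e *\<^sub>R h \<noteq> g + e *\<^sub>R h"
  proof
    assume "g - e *\<^sub>R h = g + e *\<^sub>R h"
    then have "2 *\<^sub>R (e *\<^sub>R h) = 0" using d2 by simp
    then show False using h0 epos by simp
  qed
  then have "midpoint (g - e *\<^sub>R h) (g + e *\<^sub>R h) \<in> open_segment (g - e *\<^sub>R h) (g + e *\<^sub>R h)" by simp
  moreover have "midpoint (g - e *\<^sub>R h) (g + e *\<^sub>R h) = g" by (simp add: midpoint_def scaleR_add_right[symmetric])
  ultimately show False using g a b unfolding G_def extreme_point_of_def by auto
qed

lemma finG: "finite G"
proof (rule inj_on_finite[of "\<lambda>g. {d\<in>D. blinfun_apply g d = 1}" G "Pow D"])
  show "inj_on (\<lambda>g. {d\<in>D. blinfun_apply g d = 1}) G"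
  proof (rule inj_onI)
    fix g g' assume "g \<in> G" "g' \<in> G" "{d\<in>D. blinfun_apply g d = 1} = {d\<in>D. blinfun_apply g' d = 1}"
    then show "g = g'" using P3[of g g'] by blast
  qed
qed (use finD in auto)

lemma exposed:
  assumes g: "g \<in> G"
  shows "\<exists>y. \<forall>h\<in>G - {g}. blinfun_apply h y < blinfun_apply g y"
proof -
  define A where "A = {d\<in>D. blinfun_apply g d = 1}"
  have finA: "finite A" unfolding A_def using finD by simp
  define y where "y = (\<Sum>d\<in>A. d)"
  have gy: "blinfun_apply g y = real (card A)" unfolding y_def
    by (simp add: blinfun.sum_right A_def)
  show ?thesis
  proof (intro exI ballI)
    fix h assume h: "h \<in> G - {g}"
    have hD: "blinfun_apply h d \<le> 1" if "d \<in> A" for d using P2 G_Bst[of h] h that A_def by blast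
    have "\<exists>d\<in>A. blinfun_apply h d < 1"
    proof (rule ccontr)
      assume "\<not> ?thesis"
      then have "\<forall>d\<in>D. blinfun_apply g d = 1 \<longrightarrow> blinfun_apply h d = 1" using hD unfolding A_def by force
      then have "h = g" using P3[OF g] by blast
      then show False using h by simp
    qed
    then have "(\<Sum>d\<in>A. blinfun_apply h d) < (\<Sum>d\<in>A. 1)"
      using hD finA by (intro sum_strict_mono_ex1) auto
    moreover have "blinfun_apply h y = (\<Sum>d\<in>A. blinfun_apply h d)" unfolding y_def by (simp add: blinfun.sum_right)
    ultimately show "blinfun_apply h y < blinfun_apply g y" unfolding gy by simp
  qed
qed

definition "J' x = {f\<in>Bst. blinfun_apply f x = norm x}"

lemma J_eq: "x \<noteq> 0 \<Longrightarrow> J x = J' x"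
proof -
  assume x: "x \<noteq> 0"
  have "norm f = 1" if "norm f \<le> 1" "blinfun_apply f x = norm x" for f :: "'a \<Rightarrow>\<^sub>L real"
  proof -
    have "norm x \<le> norm f * norm x" using norm_blinfun[of f x] that(2) by simp
    then have "1 \<le> norm f" using x by simp
    then show ?thesis using that(1) by simp
  qed
  then show ?thesis unfolding J_def J'_def by auto
qed

lemma norming:
  assumes x: "x \<noteq> 0"
  shows "\<exists>g\<in>G. blinfun_apply g x = norm x"
proof -
  have ne: "J' x \<noteq> {}" using hb_fd[OF fin spn x] unfolding J'_def by auto
  have "closed Bst"
  proof -
    have "Bst = cball 0 1" by (auto simp: dist_norm)
    then show ?thesis by simp
  qed
  moreover have "closed {f :: 'a \<Rightarrow>\<^sub>L real. blinfun_apply f x = norm x}"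
    using closed_vimage[of "{norm x}" "\<lambda>f. blinfun_apply f x"]
    by (simp add: linear_continuous_on vimage_def)
  ultimately have cl: "closed (J' x)" unfolding J'_def by (simp add: Collect_conj_eq closed_Int)
  have bd: "bounded (J' x)" unfolding J'_def bounded_iff by auto
  have cJ: "compact (J' x)" by (rule compact_dual[OF bd cl])
  obtain bl where bl: "set bl = Bs" using sep_list by blast
  have "\<exists>p. p extreme_point_of J' x"
  proof (rule lex_extreme_point[OF cJ ne, of "map (\<lambda>b f. blinfun_apply f b) bl"])
    show "\<forall>l\<in>set (map (\<lambda>b f. blinfun_apply f b) bl). bounded_linear l" by auto
    fix a b :: "'a \<Rightarrow>\<^sub>L real"
    assume "\<forall>l\<in>set (map (\<lambda>b f. blinfun_apply f b) bl). l a = l b"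
    then have e: "\<forall>c\<in>Bs. blinfun_apply a c = blinfun_apply b c" using bl by auto
    show "a = b"
    proof (rule blinfun_eqI)
      fix v
      have "blinfun_apply a v = (\<Sum>c\<in>Bs. co c v * blinfun_apply a c)"
        by (subst rep) (simp add: blinfun.sum_right blinfun.scaleR_right)
      also have "\<dots> = (\<Sum>c\<in>Bs. co c v * blinfun_apply b c)" using e by simp
      also have "\<dots> = blinfun_apply b v"
        by (subst (2) rep) (simp add: blinfun.sum_right blinfun.scaleR_right)
      finally show "blinfun_apply a v = blinfun_apply b v" .
    qed
  qed
  then obtain p where p: "p extreme_point_of J' x" by blast
  have lin: "linear (\<lambda>f :: 'a \<Rightarrow>\<^sub>L real. blinfun_apply f x)" by (simp add: bounded_linear.linear)
  have "p extreme_point_of Bst"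
    by (rule extreme_face[OF lin p[unfolded J'_def]]) (auto dest: bl_le_norm[of _ x] abs_le_D1)
  moreover have "blinfun_apply p x = norm x" using p unfolding J'_def extreme_point_of_def by auto
  ultimately show ?thesis unfolding G_def by auto
qed

lemma ExtJ_eq:
  assumes x: "x \<noteq> 0"
  shows "ExtJ x = {g\<in>G. blinfun_apply g x = norm x}"
proof (intro set_eqI iffI)
  fix f assume "f \<in> ExtJ x"
  then have p: "f extreme_point_of J' x" unfolding ExtJ_def J_eq[OF x] by simp
  have lin: "linear (\<lambda>f :: 'a \<Rightarrow>\<^sub>L real. blinfun_apply f x)" by (simp add: bounded_linear.linear)
  have "f extreme_point_of Bst"
    by (rule extreme_face[OF lin p[unfolded J'_def]]) (auto dest: bl_le_norm[of _ x] abs_le_D1)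
  then show "f \<in> {g\<in>G. blinfun_apply g x = norm x}"
    using p unfolding G_def J'_def extreme_point_of_def by auto
next
  fix f assume f: "f \<in> {g\<in>G. blinfun_apply g x = norm x}"
  have "f extreme_point_of J' x"
    by (rule extreme_subset[of f Bst]) (use f in \<open>auto simp: G_def J'_def extreme_point_of_def\<close>)
  then show "f \<in> ExtJ x" unfolding ExtJ_def J_eq[OF x] by simp
qed

end

lemma common_nonroot:
  fixes H :: "('a::real_vector \<Rightarrow> real) set"
  assumes "finite H" "\<forall>h\<in>H. linear h \<and> (\<exists>v. h v \<noteq> 0)"
  shows "\<exists>w. \<forall>h\<in>H. h w \<noteq> 0"
  using assms
proof (induction H rule: finite_induct)
  case empty then show ?case by simp
next
  case (insert h0 H)
  then obtain w where w: "\<forall>h\<in>H. h w \<noteq> 0" by auto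
  obtain v where v: "h0 v \<noteq> 0" using insert.prems by auto
  have "finite ((\<lambda>h. - h w / h v) ` insert h0 H)" using insert.hyps by simp
  then obtain s where s: "s \<notin> (\<lambda>h. - h w / h v) ` insert h0 H"
    using ex_new_if_finite[OF infinite_UNIV_char_0] by blast
  show ?case
  proof (intro exI[of _ "w + s *\<^sub>R v"] ballI)
    fix h assume h: "h \<in> insert h0 H"
    have lin: "linear h" using insert.prems h by blast
    have eq: "h (w + s *\<^sub>R v) = h w + s * h v" using linear_add[OF lin] linear_scale[OF lin] by simp
    show "h (w + s *\<^sub>R v) \<noteq> 0"
    proof
      assume z: "h (w + s *\<^sub>R v) = 0"
      show False
      proof (cases "h v = 0")
        case True
        then have "h w = 0" using z eq by simp
        moreover have "h \<in> H" using True h v by auto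
        ultimately show False using w by blast
      next
        case False
        then have "s = - h w / h v" using z eq by (simp add: field_simps)
        then show False using s h by blast
      qed
    qed
  qed
qed

abbreviation ev :: "('a::real_normed_vector \<Rightarrow>\<^sub>L real) \<Rightarrow> 'a \<Rightarrow> real" where
  "ev g y \<equiv> blinfun_apply g y"

lemma ev_lin: "linear (ev g)" using blinfun.bounded_linear_right bounded_linear.linear by blast

context poly
begin

definition "Op g = {y. \<forall>h\<in>G - {g}. ev h y < ev g y}"

lemma G_abs: "g \<in> G \<Longrightarrow> \<bar>ev g y\<bar> \<le> norm y"
  using bl_le_norm[OF G_Bst] by blast

lemma O_max: "y \<in> Op g \<Longrightarrow> g \<in> G \<Longrightarrow> h \<in> G \<Longrightarrow> ev h y = norm y \<Longrightarrow> h = g"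
proof (rule ccontr)
  assume a: "y \<in> Op g" "g \<in> G" "h \<in> G" "ev h y = norm y" "h \<noteq> g"
  then have "ev h y < ev g y" unfolding Op_def by blast
  moreover have "ev g y \<le> norm y" using G_le a(2) by blast
  ultimately show False using a(4) by simp
qed

lemma O_val:
  assumes "y \<in> Op g" "g \<in> G"
  shows "ev g y = norm y"
proof (cases "y = 0")
  case False
  then obtain h where "h \<in> G" "ev h y = norm y" using norming by blast
  then show ?thesis using O_max assms by blast
qed simp

lemma exposed_nz:
  assumes g: "g \<in> G" and nz: "\<exists>z::'a. z \<noteq> 0"
  shows "\<exists>y. y \<in> Op g \<and> y \<noteq> 0"
proof -
  obtain y where y: "\<forall>h\<in>G - {g}. ev h y < ev g y" using exposed[OF g] by blast
  show ?thesis
  proof (cases "y = 0")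
    case True
    then have "G - {g} = {}" using y by auto
    then have "Op g = UNIV" unfolding Op_def by auto
    then show ?thesis using nz by auto
  next
    case False then show ?thesis using y unfolding Op_def by auto
  qed
qed

lemma par_fwd:
  assumes "parallel u v" "u \<noteq> 0"
  shows "\<exists>k\<in>G. ev k u = norm u \<and> \<bar>ev k v\<bar> = norm v"
proof -
  obtain c where c: "\<bar>c\<bar> = 1" "norm (u + c *\<^sub>R v) = norm u + norm v"
    using assms(1) unfolding parallel_def by blast
  have "u + c *\<^sub>R v \<noteq> 0"
  proof
    assume "u + c *\<^sub>R v = 0"
    then have "norm u + norm v = 0" using c(2) by simp
    then have "norm u = 0" using norm_ge_zero[of v] norm_ge_zero[of u] by linarith
    then show False using assms(2) by simp
  qed
  then obtain k where k: "k \<in> G" "ev k (u + c *\<^sub>R v) = norm (u + c *\<^sub>R v)" using norming by blast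
  have e: "ev k u + c * ev k v = norm u + norm v"
    using k(2) c(2) by (simp add: blinfun.add_right blinfun.scaleR_right)
  have a: "ev k u \<le> norm u" using G_le k(1) by blast
  have b: "c * ev k v \<le> norm v"
  proof -
    have "c * ev k v \<le> \<bar>c * ev k v\<bar>" by simp
    also have "\<dots> = \<bar>ev k v\<bar>" using c(1) by (simp add: abs_mult)
    also have "\<dots> \<le> norm v" using G_abs k(1) by blast
    finally show ?thesis .
  qed
  have "ev k u = norm u" "c * ev k v = norm v" using a b e by linarith+
  moreover have "\<bar>ev k v\<bar> = \<bar>c * ev k v\<bar>" using c(1) by (simp add: abs_mult)
  ultimately show ?thesis using k(1) by auto
qed

lemma par_bwd:
  assumes "g \<in> G" "ev g x = norm x" "ev g y = norm y"
  shows "parallel x y"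
  unfolding parallel_def
proof (intro exI[of _ 1] conjI)
  have "norm x + norm y = ev g (x + y)" using assms by (simp add: blinfun.add_right)
  also have "\<dots> \<le> norm (x + y)" using G_le assms(1) by blast
  finally show "norm (x + 1 *\<^sub>R y) = norm x + norm y" using norm_triangle_ineq[of x y] by simp
qed simp

end

locale mainloc = poly Bs for Bs :: "'a::real_normed_vector set" +
  fixes T :: "'a \<Rightarrow> 'a"
  assumes linT: "linear T" and bijT: "bij T" and ppT: "preserves_parallel T"
  and nz: "\<exists>z::'a. z \<noteq> 0"
begin

lemma T_add: "T (a + b) = T a + T b" using linear_add[OF linT] .
lemma T_scale: "T (c *\<^sub>R a) = c *\<^sub>R T a" using linear_scale[OF linT] .
lemma T_0: "T 0 = 0" using linear_0[OF linT] .
lemma T_inj: "T a = 0 \<longleftrightarrow> a = 0"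
proof
  assume "T a = 0"
  then have "T a = T 0" using T_0 by simp
  then show "a = 0" using bij_is_inj[OF bijT] by (simp add: inj_eq)
qed (simp add: T_0)
lemma T_surj: "\<exists>x. T x = y"
proof -
  have "y \<in> range T" using bij_is_surj[OF bijT] by simp
  then show ?thesis by blast
qed

lemma generic:
  assumes g: "g \<in> G"
  shows "\<exists>x\<in>Op g. x \<noteq> 0 \<and> (\<exists>h\<in>G. T x \<in> Op h)"
proof -
  obtain x0 where x0: "x0 \<in> Op g" "x0 \<noteq> 0" using exposed_nz[OF g nz] by blast
  define P where "P = {p \<in> G \<times> G. fst p \<noteq> snd p}"
  define H where "H = (\<lambda>p. (\<lambda>y. ev (fst p) (T y) - ev (snd p) (T y))) ` P"
  have "P \<subseteq> G \<times> G" unfolding P_def by blast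
  moreover have "finite (G \<times> G)" using finG finG by (rule finite_cartesian_product)
  ultimately have "finite P" by (rule finite_subset)
  then have finH: "finite H" unfolding H_def by (rule finite_imageI)
  have "\<forall>h\<in>H. linear h \<and> (\<exists>v. h v \<noteq> 0)"
  proof
    fix h assume "h \<in> H"
    then obtain p where p: "p \<in> P" "h = (\<lambda>y. ev (fst p) (T y) - ev (snd p) (T y))"
      unfolding H_def by (rule imageE)
    define k where "k = fst p"
    define k' where "k' = snd p"
    have kk: "k \<in> G" "k' \<in> G" "k \<noteq> k'" "h = (\<lambda>y. ev k (T y) - ev k' (T y))"
      using p unfolding P_def k_def k'_def by auto
    have l1: "linear (\<lambda>y. ev k (T y))" using linear_compose[OF linT ev_lin[of k]] by (simp add: o_def)
    have l2: "linear (\<lambda>y. ev k' (T y))" using linear_compose[OF linT ev_lin[of k']] by (simp add: o_def)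
    have "linear h" unfolding kk(4) using linear_compose_sub[OF l1 l2] .
    moreover have "\<exists>v. h v \<noteq> 0"
    proof -
      obtain u where "ev k u \<noteq> ev k' u" using kk(3) blinfun_eqI by blast
      moreover obtain v where "T v = u" using T_surj by blast
      ultimately show ?thesis using kk(4) by auto
    qed
    ultimately show "linear h \<and> (\<exists>v. h v \<noteq> 0)" by blast
  qed
  then obtain w where w: "\<forall>h\<in>H. h w \<noteq> 0" using common_nonroot[OF finH] by blast
  have wk: "ev k (T w) \<noteq> ev k' (T w)" if "k \<in> G" "k' \<in> G" "k \<noteq> k'" for k k'
  proof -
    have "(k, k') \<in> P" unfolding P_def using that by simp
    then have "(\<lambda>y. ev k (T y) - ev k' (T y)) \<in> H" unfolding H_def by force
    then show ?thesis using w by auto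
  qed
  define E where "E = insert 1 ((\<lambda>k. (ev g x0 - ev k x0) / (\<bar>ev g w - ev k w\<bar> + 1)) ` (G - {g}))"
  have finE: "finite E" unfolding E_def using finG by simp
  have Epos: "\<forall>t\<in>E. t > 0"
  proof
    fix t assume "t \<in> E"
    then consider "t = 1" | k where "k \<in> G - {g}" "t = (ev g x0 - ev k x0) / (\<bar>ev g w - ev k w\<bar> + 1)"
      unfolding E_def by blast
    then show "t > 0"
    proof cases
      case 2
      then have "ev k x0 < ev g x0" using x0(1) unfolding Op_def by blast
      then show ?thesis using 2 by (simp add: add_pos_nonneg)
    qed simp
  qed
  define e where "e = Min E"
  have epos: "e > 0" unfolding e_def using finE Epos by (simp add: E_def)
  have ele: "e \<le> (ev g x0 - ev k x0) / (\<bar>ev g w - ev k w\<bar> + 1)" if "k \<in> G - {g}" for k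
    unfolding e_def using finE that by (intro Min_le) (auto simp: E_def)
  define Bad where "Bad = (\<lambda>(k, k'). - (ev k (T x0) - ev k' (T x0)) / (ev k (T w) - ev k' (T w))) ` (G \<times> G)"
  define Bad2 where "Bad2 = {t. x0 + t *\<^sub>R w = 0}"
  have finBad: "finite Bad" unfolding Bad_def using finG by simp
  have finBad2: "finite Bad2"
  proof (cases "Bad2 = {}")
    case False
    then obtain t0 where t0: "x0 + t0 *\<^sub>R w = 0" unfolding Bad2_def by blast
    have "Bad2 \<subseteq> {t0}"
    proof
      fix t assume "t \<in> Bad2"
      then have t: "x0 + t *\<^sub>R w = 0" unfolding Bad2_def by simp
      have "(t - t0) *\<^sub>R w = (x0 + t *\<^sub>R w) - (x0 + t0 *\<^sub>R w)" by (simp add: algebra_simps)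
      also have "\<dots> = 0" using t t0 by simp
      finally have "t = t0 \<or> w = 0" by simp
      then show "t \<in> {t0}" using t x0(2) by auto
    qed
    then show ?thesis using finite_subset by blast
  qed simp
  have "infinite ({0<..<e} - (Bad \<union> Bad2))"
    using Diff_infinite_finite[of "Bad \<union> Bad2" "{0<..<e}"] finBad finBad2 epos by simp
  then have "{0<..<e} - (Bad \<union> Bad2) \<noteq> {}" using infinite_imp_nonempty by blast
  then obtain t where "t \<in> {0<..<e} - (Bad \<union> Bad2)" by blast
  then have t: "t \<in> {0<..<e}" "t \<notin> Bad" "t \<notin> Bad2" by auto
  define x where "x = x0 + t *\<^sub>R w"
  have xnz: "x \<noteq> 0" using t(3) unfolding x_def Bad2_def by simp
  have xO: "x \<in> Op g"
    unfolding Op_def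
  proof (intro CollectI ballI)
    fix k assume k: "k \<in> G - {g}"
    have d: "ev k x0 < ev g x0" using x0(1) k unfolding Op_def by blast
    have "t * \<bar>ev g w - ev k w\<bar> < ev g x0 - ev k x0"
    proof -
      have "t * (\<bar>ev g w - ev k w\<bar> + 1) < e * (\<bar>ev g w - ev k w\<bar> + 1)"
        using t(1) by (intro mult_strict_right_mono) auto
      also have "\<dots> \<le> ev g x0 - ev k x0"
        using ele[OF k] by (simp add: pos_le_divide_eq add_pos_nonneg)
      finally show ?thesis using t(1) by (simp add: algebra_simps)
    qed
    moreover have "- (t * \<bar>ev g w - ev k w\<bar>) \<le> t * (ev g w - ev k w)"
    proof -
      have "t * (- \<bar>ev g w - ev k w\<bar>) \<le> t * (ev g w - ev k w)"
        using t(1) by (intro mult_left_mono) auto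
      then show ?thesis by simp
    qed
    ultimately show "ev k x < ev g x"
      unfolding x_def by (simp add: blinfun.add_right blinfun.scaleR_right algebra_simps)
  qed
  have dist: "ev k (T x) \<noteq> ev k' (T x)" if "k \<in> G" "k' \<in> G" "k \<noteq> k'" for k k'
  proof
    assume eq: "ev k (T x) = ev k' (T x)"
    have "T x = T x0 + t *\<^sub>R T w" unfolding x_def by (simp add: T_add T_scale)
    then have "(ev k (T x0) - ev k' (T x0)) + t * (ev k (T w) - ev k' (T w)) = 0"
      using eq by (simp add: blinfun.add_right blinfun.scaleR_right algebra_simps)
    then have "t = - (ev k (T x0) - ev k' (T x0)) / (ev k (T w) - ev k' (T w))"
      using wk[OF that] by (simp add: field_simps)
    then have "t \<in> Bad" unfolding Bad_def using that by force
    then show False using t(2) by blast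
  qed
  obtain h where h: "h \<in> G" "\<forall>k\<in>G. ev k (T x) \<le> ev h (T x)"
  proof -
    have ne: "(\<lambda>k. ev k (T x)) ` G \<noteq> {}" using g by blast
    have "Max ((\<lambda>k. ev k (T x)) ` G) \<in> (\<lambda>k. ev k (T x)) ` G" using Max_in[OF _ ne] finG by blast
    then obtain h where "h \<in> G" "ev h (T x) = Max ((\<lambda>k. ev k (T x)) ` G)" by auto
    moreover have "\<forall>k\<in>G. ev k (T x) \<le> Max ((\<lambda>k. ev k (T x)) ` G)" using finG by simp
    ultimately show ?thesis using that by auto
  qed
  have "T x \<in> Op h" unfolding Op_def
  proof (intro CollectI ballI)
    fix k assume "k \<in> G - {h}"
    then have "k \<in> G" "k \<noteq> h" by auto
    then show "ev k (T x) < ev h (T x)" using h dist[of k h] by force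
  qed
  then show ?thesis using xO xnz h(1) by blast
qed

end

context mainloc
begin

lemma M1:
  assumes g: "g \<in> G"
  shows "\<exists>h\<in>G. \<forall>y. ev g y = norm y \<longrightarrow> ev h (T y) = norm (T y)"
proof -
  obtain x h where x: "x \<in> Op g" "x \<noteq> 0" and h: "h \<in> G" "T x \<in> Op h"
    using generic[OF g] by blast
  have gx: "ev g x = norm x" using O_val[OF x(1) g] .
  have Txnz: "T x \<noteq> 0" using x(2) T_inj by simp
  have hTx: "ev h (T x) = norm (T x)" using O_val[OF h(2) h(1)] .
  have key: "\<bar>ev h (T p)\<bar> = norm (T p)" if "ev g p = norm p" for p
  proof -
    have "parallel x p" using par_bwd[OF g gx that] .
    then have "parallel (T x) (T p)" using ppT unfolding preserves_parallel_def by blast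
    then obtain k where k: "k \<in> G" "ev k (T x) = norm (T x)" "\<bar>ev k (T p)\<bar> = norm (T p)"
      using par_fwd Txnz by blast
    have "k = h" using O_max[OF h(2) h(1) k(1) k(2)] .
    then show ?thesis using k(3) by simp
  qed
  show ?thesis
  proof (intro bexI[OF _ h(1)] allI impI)
    fix y assume gy: "ev g y = norm y"
    show "ev h (T y) = norm (T y)"
    proof (rule ccontr)
      assume ne: "ev h (T y) \<noteq> norm (T y)"
      have "\<bar>ev h (T y)\<bar> = norm (T y)" using key[OF gy] .
      then have b: "ev h (T y) < 0" using ne by (cases "ev h (T y) \<ge> 0") auto
      define a where "a = ev h (T x)"
      define b' where "b' = ev h (T y)"
      have apos: "a > 0" unfolding a_def using hTx Txnz by simp
      define s where "s = a / (a - b')"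
      have s: "0 < s" "s < 1" unfolding s_def using apos b b'_def by (auto simp: field_simps)
      define p where "p = (1 - s) *\<^sub>R x + s *\<^sub>R y"
      have gp: "ev g p = (1 - s) * norm x + s * norm y"
        unfolding p_def using gx gy by (simp add: blinfun.add_right blinfun.scaleR_right)
      have "norm p \<le> (1 - s) * norm x + s * norm y"
        unfolding p_def using s norm_triangle_ineq[of "(1 - s) *\<^sub>R x" "s *\<^sub>R y"] by simp
      moreover have "ev g p \<le> norm p" using G_le g by blast
      ultimately have gpn: "ev g p = norm p" using gp by linarith
      have "ev h (T p) = (1 - s) * a + s * b'"
        unfolding p_def a_def b'_def by (simp add: T_add T_scale blinfun.add_right blinfun.scaleR_right)
      also have "\<dots> = 0" unfolding s_def using apos b b'_def by (simp add: field_simps)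
      finally have "norm (T p) = 0" using key[OF gpn] by simp
      then have "p = 0" using T_inj by simp
      moreover have "ev g p > 0"
      proof -
        have "(1 - s) * norm x > 0" using s x(2) by simp
        moreover have "s * norm y \<ge> 0" using s by simp
        ultimately show ?thesis using gp by linarith
      qed
      ultimately show False by simp
    qed
  qed
qed

definition "rho g = (SOME h. h \<in> G \<and> (\<forall>y. ev g y = norm y \<longrightarrow> ev h (T y) = norm (T y)))"

lemma rho:
  assumes g: "g \<in> G"
  shows "rho g \<in> G \<and> (\<forall>y. ev g y = norm y \<longrightarrow> ev (rho g) (T y) = norm (T y))"
proof -
  obtain h where "h \<in> G" "\<forall>y. ev g y = norm y \<longrightarrow> ev h (T y) = norm (T y)" using M1[OF g] by blast
  then have "h \<in> G \<and> (\<forall>y. ev g y = norm y \<longrightarrow> ev h (T y) = norm (T y))" by blast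
  then show ?thesis unfolding rho_def by (rule someI)
qed

lemma rho_surj:
  assumes h: "h \<in> G"
  shows "\<exists>g\<in>G. rho g = h"
proof (cases "G - {h} = {}")
  case True
  then have "rho h \<in> {h}" using rho[OF h] by blast
  then show ?thesis using h by auto
next
  case False
  obtain y where y: "\<forall>k\<in>G - {h}. ev k y < ev h y" using exposed[OF h] by blast
  have ynz: "y \<noteq> 0"
  proof
    assume "y = 0"
    obtain k where "k \<in> G - {h}" using False by blast
    then show False using y \<open>y = 0\<close> by fastforce
  qed
  have yO: "y \<in> Op h" unfolding Op_def using y by simp
  obtain z where z: "T z = y" using T_surj by blast
  have znz: "z \<noteq> 0" using z ynz T_0 by auto
  obtain g where g: "g \<in> G" "ev g z = norm z" using norming[OF znz] by blast
  have "ev (rho g) y = norm y" using rho[OF g(1)] g(2) z by blast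
  then have "rho g = h" using O_max[OF yO h] rho[OF g(1)] by blast
  then show ?thesis using g(1) by blast
qed

lemma rho_inj: "inj_on rho G"
proof (rule finite_surj_inj[OF finG])
  show "G \<subseteq> rho ` G" using rho_surj by blast
qed

lemma rho_back:
  assumes g: "g \<in> G" and r: "ev (rho g) (T x) = norm (T x)"
  shows "ev g x = norm x"
proof (cases "x = 0")
  case True then show ?thesis by simp
next
  case xnz: False
  show ?thesis
  proof (cases "G - {rho g} = {}")
    case True
    then have G1: "G = {rho g}" using rho[OF g] by blast
    have Gg: "G = {g}"
    proof -
      have "g \<in> {rho g}" using G1 g by simp
      then have "rho g = g" by simp
      then show ?thesis using G1 by simp
    qed
    obtain k where k: "k \<in> G" "ev k x = norm x" using norming[OF xnz] by blast
    have "k = g" using k(1) Gg by blast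
    then show ?thesis using k(2) by simp
  next
    case False
    have rg: "rho g \<in> G" using rho[OF g] by blast
    obtain y0 where y0: "\<forall>k\<in>G - {rho g}. ev k y0 < ev (rho g) y0" using exposed[OF rg] by blast
    obtain v where v: "T v = y0" using T_surj by blast
    have main: "ev g (x + s *\<^sub>R v) = norm (x + s *\<^sub>R v)" if s: "s > 0" for s
    proof -
      define u where "u = T x + s *\<^sub>R y0"
      have Tz: "T (x + s *\<^sub>R v) = u" unfolding u_def using v by (simp add: T_add T_scale)
      have uO: "u \<in> Op (rho g)" unfolding Op_def
      proof (intro CollectI ballI)
        fix k assume k: "k \<in> G - {rho g}"
        have "ev k (T x) \<le> norm (T x)" using G_le k by blast
        moreover have "s * ev k y0 < s * ev (rho g) y0" using y0 k s by simp
        ultimately show "ev k u < ev (rho g) u"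
          unfolding u_def using r by (simp add: blinfun.add_right blinfun.scaleR_right)
      qed
      show ?thesis
      proof (cases "x + s *\<^sub>R v = 0")
        case True then show ?thesis by simp
      next
        case False
        obtain g' where g': "g' \<in> G" "ev g' (x + s *\<^sub>R v) = norm (x + s *\<^sub>R v)" using norming[OF False] by blast
        have "ev (rho g') u = norm u" using rho[OF g'(1)] g'(2) Tz by metis
        then have "rho g' = rho g" using O_max[OF uO rg] rho[OF g'(1)] by blast
        then have "g' = g" using rho_inj g g'(1) inj_on_def by metis
        then show ?thesis using g' by simp
      qed
    qed
    show ?thesis
    proof (rule ccontr)
      assume ne: "ev g x \<noteq> norm x"
      have le: "ev g x \<le> norm x" using G_le g by blast
      define d where "d = norm x - ev g x"
      have dpos: "d > 0" using ne le d_def by simp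
      define s where "s = d / (2 * (norm v + \<bar>ev g v\<bar> + 1))"
      have "0 \<le> norm v + \<bar>ev g v\<bar>" by simp
      then have "0 < norm v + \<bar>ev g v\<bar> + 1" by linarith
      then have den: "2 * (norm v + \<bar>ev g v\<bar> + 1) > 0" by simp
      have spos: "s > 0" unfolding s_def using dpos den by (rule divide_pos_pos)
      have m: "ev g x + s * ev g v = norm (x + s *\<^sub>R v)"
        using main[OF spos] by (simp add: blinfun.add_right blinfun.scaleR_right)
      have "norm x - s * norm v \<le> norm (x + s *\<^sub>R v)"
        using norm_triangle_ineq2[of x "- (s *\<^sub>R v)"] spos by simp
      moreover have "s * ev g v \<le> s * \<bar>ev g v\<bar>" using spos by (simp add: mult_left_mono)
      ultimately have "d \<le> s * (norm v + \<bar>ev g v\<bar>)" using m d_def by (simp add: algebra_simps)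
      moreover have "s * (norm v + \<bar>ev g v\<bar>) < d"
      proof -
        have "s * (norm v + \<bar>ev g v\<bar>) \<le> s * (2 * (norm v + \<bar>ev g v\<bar> + 1)) / 2" using spos by simp
        also have "\<dots> = d / 2" unfolding s_def using den by simp
        finally show ?thesis using dpos by simp
      qed
      ultimately show False by simp
    qed
  qed
qed

lemma card_eq:
  assumes z: "z \<noteq> 0"
  shows "card (ExtJ (T z)) = card (ExtJ z)"
proof -
  have Tz: "T z \<noteq> 0" using z T_inj by simp
  have "ExtJ (T z) = rho ` ExtJ z"
  proof (intro set_eqI iffI)
    fix h assume "h \<in> ExtJ (T z)"
    then have h: "h \<in> G" "ev h (T z) = norm (T z)" using ExtJ_eq[OF Tz] by auto
    obtain g where g: "g \<in> G" "rho g = h" using rho_surj[OF h(1)] by blast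
    have "ev g z = norm z" using rho_back[OF g(1)] h(2) g(2) by simp
    then have "g \<in> ExtJ z" using ExtJ_eq[OF z] g(1) by simp
    then show "h \<in> rho ` ExtJ z" using g(2) by blast
  next
    fix h assume "h \<in> rho ` ExtJ z"
    then obtain g where g: "g \<in> ExtJ z" "h = rho g" by blast
    then have g': "g \<in> G" "ev g z = norm z" using ExtJ_eq[OF z] by auto
    have "rho g \<in> G" "ev (rho g) (T z) = norm (T z)" using rho[OF g'(1)] g'(2) by auto
    then show "h \<in> ExtJ (T z)" using ExtJ_eq[OF Tz] g(2) by simp
  qed
  moreover have "inj_on rho (ExtJ z)"
    using inj_on_subset[OF rho_inj] ExtJ_eq[OF z] by blast
  ultimately show ?thesis by (simp add: card_image)
qed

end

theorem mainTheorem19: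
  fixes T :: "'a::banach \<Rightarrow> 'a"
  assumes "fin_dim_space TYPE('a)"
    and "polyhedral TYPE('a)"
    and "\<forall>(x1::'a) (x2::'a). x1 \<noteq> 0 \<longrightarrow> x2 \<noteq> 0 \<longrightarrow> smooth_order x1 > smooth_order x2
           \<longrightarrow> card (ExtJ x1) > card (ExtJ x2)"
    and "linear T" and "bij T"
    and "preserves_parallel T"
  shows "\<forall>z. z \<noteq> 0 \<longrightarrow> smooth_order (T z) = smooth_order z"
proof (intro allI impI)
  fix z :: 'a assume z: "z \<noteq> 0"
  obtain B0 :: "'a set" where B0: "finite B0" "span B0 = UNIV"
    using assms(1) unfolding fin_dim_space_def by blast
  obtain Bs where Bs: "Bs \<subseteq> B0" "independent Bs" "B0 \<subseteq> span Bs"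
    using maximal_independent_subset[of B0] by blast
  have "span B0 \<subseteq> span Bs" by (rule span_minimal[OF Bs(3) subspace_span])
  then have spB: "span Bs = UNIV" using B0(2) by blast
  have finB: "finite Bs" using finite_subset[OF Bs(1) B0(1)] .
  have finD: "finite {x::'a. x extreme_point_of cball 0 1}"
    using assms(2) unfolding polyhedral_def .
  interpret M: mainloc Bs T
  proof unfold_locales
    show "\<exists>z::'a. z \<noteq> 0" using z by blast
  qed (use finB Bs(2) spB finD assms(4,5,6) in \<open>auto simp: linear_add[OF assms(4)] linear_scale[OF assms(4)]\<close>)
  have ce: "card (ExtJ (T z)) = card (ExtJ z)" using M.card_eq[OF z] .
  have Tz: "T z \<noteq> 0" using M.T_inj z by simp
  have n1: "\<not> smooth_order (T z) > smooth_order z"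
  proof
    assume "smooth_order (T z) > smooth_order z"
    then have "card (ExtJ (T z)) > card (ExtJ z)" using assms(3) Tz z by blast
    then show False using ce by simp
  qed
  have n2: "\<not> smooth_order z > smooth_order (T z)"
  proof
    assume "smooth_order z > smooth_order (T z)"
    then have "card (ExtJ z) > card (ExtJ (T z))" using assms(3) Tz z by blast
    then show False using ce by simp
  qed
  show "smooth_order (T z) = smooth_order z" using n1 n2 by simp
qed

end
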